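(* Let $k\ge1$ and $a_k\in\mathbb{R}$. The sequence $\{a_k n^k \bmod 1\}_{n\ge0}$ in $\mathbb{T}$ has the repetition property if and only if $\liminf_{q\to\infty} q^{k-1}\langle a_k q\rangle = 0$ (with $q$ ranging over positive integers).
   Context: $\mathbb{T}=\mathbb{R}/\mathbb{Z}$ with metric $\mathrm{dist}(x,y)=\langle x-y\rangle$, where for $x\in\mathbb{R}$ (or its class in $\mathbb{T}$), $\langle x\rangle=\min\{|x-p|:p\in\mathbb{Z}\}$ is the distance to the nearest integer. $\mathbb{Z}_+=\{1,2,\ldots\}$. A sequence $\{\omega_n\}_{n\ge0}$ in a metric space $\Omega$ has the repetition property if for every $\varepsilon>0$ and $r \in \mathbb{Z}_+$ there exists $q \in \mathbb{Z}_+$ such that $\mathrm{dist}(\omega_n,\omega_{n+q}) < \varepsilon$ for $n = 0,1,\ldots, rq$. *)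

theory Defs
  imports "HOL-Analysis.Analysis"
begin

definition nint_dist :: "real \<Rightarrow> real" where
  "nint_dist x = (INF p\<in>(\<int>::real set). \<bar>x - p\<bar>)"

text \<open>The circle T = R/Z: a point is represented by any real representative;
  dist(x,y) = \<langle>x - y\<rangle>, which does not depend on the representatives.\<close>
definition torus_dist :: "real \<Rightarrow> real \<Rightarrow> real" where
  "torus_dist x y = nint_dist (x - y)"

definition repetition_property_T :: "(nat \<Rightarrow> real) \<Rightarrow> bool" where
  "repetition_property_T w \<longleftrightarrow>
     (\<forall>\<epsilon>>0. \<forall>r::nat. r \<ge> 1 \<longrightarrow>
        (\<exists>q::nat. q \<ge> 1 \<and> (\<forall>n\<le>r * q. torus_dist (w n) (w (n + q)) < \<epsilon>)))"

end

theory Submission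
  imports Defs
begin

lemma nd_round: "nint_dist x = \<bar>x - of_int (round x)\<bar>"
  unfolding nint_dist_def
proof (rule cInf_eq_minimum)
  show "\<bar>x - of_int (round x)\<bar> \<in> (\<lambda>p. \<bar>x - p\<bar>) ` \<int>" by (auto simp: Ints_def)
  fix y assume "y \<in> (\<lambda>p. \<bar>x - p\<bar>) ` (\<int>::real set)"
  then obtain m where "y = \<bar>x - of_int m\<bar>" by (auto elim: Ints_cases)
  then show "\<bar>x - of_int (round x)\<bar> \<le> y" using round_diff_minimal by simp
qed

lemma nd_le: "nint_dist x \<le> \<bar>x - of_int m\<bar>"
  using nd_round round_diff_minimal by metis

lemma nd_nonneg: "nint_dist x \<ge> 0"
  by (simp add: nd_round)

lemma nd_abs_le: "nint_dist x \<le> \<bar>x\<bar>"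
  using nd_le[of x 0] by simp

lemma nd_add_int: "nint_dist (x + of_int m) = nint_dist x"
proof -
  have "nint_dist (x + of_int m) \<le> nint_dist x"
    using nd_le[of "x + of_int m" "round x + m"] by (simp add: nd_round)
  moreover have "nint_dist x \<le> nint_dist (x + of_int m)"
    using nd_le[of x "round (x + of_int m) - m"] by (simp add: nd_round)
  ultimately show ?thesis by simp
qed

lemma nd_minus: "nint_dist (- x) = nint_dist x"
proof -
  have "nint_dist (- x) \<le> nint_dist x"
    using nd_le[of "-x" "- round x"] by (simp add: nd_round)
  moreover have "nint_dist x \<le> nint_dist (-x)"
    using nd_le[of x "- round (-x)"] by (simp add: nd_round)
  ultimately show ?thesis by simp
qed

lemma nd_diff: "nint_dist (x - y) \<le> nint_dist x + nint_dist y"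
  using nd_le[of "x - y" "round x - round y"] by (simp add: nd_round)

lemma nd_small: assumes "\<bar>x\<bar> \<le> 1/2" shows "nint_dist x = \<bar>x\<bar>"
proof -
  have "\<bar>x - of_int m\<bar> \<ge> \<bar>x\<bar>" for m :: int
  proof (cases "m = 0")
    case False
    then have "\<bar>of_int m :: real\<bar> \<ge> 1" by linarith
    then show ?thesis using assms by linarith
  qed simp
  then show ?thesis using nd_abs_le[of x] nd_round[of x] by (metis antisym)
qed

lemma nd_zero_int: "nint_dist x = 0 \<Longrightarrow> x = of_int (round x)"
  by (simp add: nd_round)

lemma torus_frac: "torus_dist (frac u) (frac v) = nint_dist (v - u)"
proof -
  have "frac u - frac v = - (v - u) + of_int (\<lfloor>v\<rfloor> - \<lfloor>u\<rfloor>)"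
    by (simp add: frac_def)
  then have "torus_dist (frac u) (frac v) = nint_dist (- (v - u) + of_int (\<lfloor>v\<rfloor> - \<lfloor>u\<rfloor>))"
    unfolding torus_dist_def by metis
  then show ?thesis by (simp only: nd_add_int nd_minus)
qed

definition Lead :: "nat \<Rightarrow> real \<Rightarrow> (real \<Rightarrow> real) \<Rightarrow> bool" where
  "Lead d c f \<longleftrightarrow> (\<exists>b. b d = c \<and> (\<forall>x. f x = (\<Sum>i\<le>d. b i * x ^ i)))"

lemma binom_diff:
  "(x + h) ^ i - x ^ i = (\<Sum>j<i. of_nat (i choose j) * x ^ j * (h::real) ^ (i - j))"
proof -
  have "(x + h) ^ i = (\<Sum>j\<le>i. of_nat (i choose j) * x ^ j * h ^ (i - j))"
    by (rule binomial_ring)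
  also have "\<dots> = (\<Sum>j<i. of_nat (i choose j) * x ^ j * h ^ (i - j)) + x ^ i"
    by (simp add: lessThan_Suc_atMost[symmetric])
  finally show ?thesis by simp
qed

lemma diff_lead:
  assumes "Lead (Suc d) c f"
  shows "Lead d (real (Suc d) * h * c) (\<lambda>x. f (x + h) - f x)"
proof -
  obtain b where b: "b (Suc d) = c" "\<And>x. f x = (\<Sum>i\<le>Suc d. b i * x ^ i)"
    using assms unfolding Lead_def by blast
  define b' where "b' j = (\<Sum>i\<in>{i\<in>{..Suc d}. j < i}. b i * of_nat (i choose j) * h ^ (i - j))" for j
  have "{i\<in>{..Suc d}. d < i} = {Suc d}" by auto
  then have b'd: "b' d = real (Suc d) * h * c"
    by (simp add: b'_def b)
  have "f (x + h) - f x = (\<Sum>j\<le>d. b' j * x ^ j)" for x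
  proof -
    have "f (x + h) - f x = (\<Sum>i\<le>Suc d. b i * ((x + h) ^ i - x ^ i))"
      by (simp add: b sum_subtractf right_diff_distrib)
    also have "\<dots> = (\<Sum>i\<le>Suc d. \<Sum>j<i. b i * (of_nat (i choose j) * x ^ j * h ^ (i - j)))"
      by (simp add: binom_diff sum_distrib_left)
    also have "\<dots> = (\<Sum>i\<le>Suc d. \<Sum>j\<le>d. if j < i then b i * (of_nat (i choose j) * x ^ j * h ^ (i - j)) else 0)"
    proof (rule sum.cong[OF refl])
      fix i assume "i \<in> {..Suc d}"
      then have eq: "{..<i} = {j\<in>{..d}. j < i}" by auto
      show "(\<Sum>j<i. b i * (of_nat (i choose j) * x ^ j * h ^ (i - j))) =
        (\<Sum>j\<le>d. if j < i then b i * (of_nat (i choose j) * x ^ j * h ^ (i - j)) else 0)"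
        unfolding eq by (rule sum.inter_filter) simp
    qed
    also have "\<dots> = (\<Sum>j\<le>d. \<Sum>i\<le>Suc d. if j < i then b i * (of_nat (i choose j) * x ^ j * h ^ (i - j)) else 0)"
      by (rule sum.swap)
    also have "\<dots> = (\<Sum>j\<le>d. b' j * x ^ j)"
    proof (rule sum.cong[OF refl])
      fix j
      have "b' j * x ^ j = (\<Sum>i\<in>{i\<in>{..Suc d}. j < i}. b i * (of_nat (i choose j) * x ^ j * h ^ (i - j)))"
        unfolding b'_def sum_distrib_right by (rule sum.cong) (auto simp: mult_ac)
      also have "\<dots> = (\<Sum>i\<le>Suc d. if j < i then b i * (of_nat (i choose j) * x ^ j * h ^ (i - j)) else 0)"
        by (rule sum.inter_filter) simp
      finally show "(\<Sum>i\<le>Suc d. if j < i then b i * (of_nat (i choose j) * x ^ j * h ^ (i - j)) else 0) = b' j * x ^ j" by simp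
    qed
    finally show ?thesis .
  qed
  then show ?thesis unfolding Lead_def using b'd by blast
qed

lemma iter_lead:
  assumes "Lead d c f" "\<forall>i\<le>d. nint_dist (f (x + real i * h)) \<le> \<eta>"
  shows "nint_dist (fact d * h ^ d * c) \<le> 2 ^ d * \<eta>"
  using assms
proof (induction d arbitrary: c f \<eta>)
  case 0
  then obtain b where "b 0 = c" "\<And>x. f x = (\<Sum>i\<le>0. b i * x ^ i)"
    unfolding Lead_def by blast
  then have "f x = c" by simp
  then show ?case using 0(2) by auto
next
  case (Suc d)
  let ?g = "\<lambda>x. f (x + h) - f x"
  have L: "Lead d (real (Suc d) * h * c) ?g" by (rule diff_lead[OF Suc.prems(1)])
  have "\<forall>i\<le>d. nint_dist (?g (x + real i * h)) \<le> 2 * \<eta>"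
  proof (intro allI impI)
    fix i assume "i \<le> d"
    then have "nint_dist (f (x + real (Suc i) * h)) \<le> \<eta>" "nint_dist (f (x + real i * h)) \<le> \<eta>"
      using Suc.prems(2) by auto
    then have "nint_dist (f (x + real (Suc i) * h) - f (x + real i * h)) \<le> 2 * \<eta>"
      using nd_diff[of "f (x + real (Suc i) * h)" "f (x + real i * h)"] by linarith
    moreover have eq: "x + real i * h + h = x + real (Suc i) * h" by (simp add: algebra_simps)
    ultimately show "nint_dist (?g (x + real i * h)) \<le> 2 * \<eta>"
      by (simp only: eq)
  qed
  from Suc.IH[OF L this] show ?case
    by (simp add: algebra_simps)
qed

lemma sweep:
  assumes A: "\<And>h. 1 \<le> h \<Longrightarrow> h \<le> H \<Longrightarrow> nint_dist (z * real h ^ d) \<le> \<eta>"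
    and E: "2 ^ d * \<eta> \<le> 1/2" and H: "1 \<le> H"
  shows "nint_dist z * real H ^ d \<le> \<eta>"
proof -
  define y where "y = z - of_int (round z)"
  have ndy: "nint_dist z = \<bar>y\<bar>" by (simp add: y_def nd_round)
  have red: "nint_dist (z * real h ^ d) = nint_dist (y * real h ^ d)" for h
  proof -
    have "z * real h ^ d = y * real h ^ d + of_int (round z * int h ^ d)"
      by (simp add: y_def algebra_simps)
    then show ?thesis by (simp only: nd_add_int)
  qed
  have eta0: "0 \<le> \<eta>" using A[of 1] H nd_nonneg[of "z * real 1 ^ d"] by linarith
  have "1 \<le> h \<longrightarrow> h \<le> H \<longrightarrow> \<bar>y\<bar> * real h ^ d \<le> \<eta>" for h
  proof (induction h)
    case 0 then show ?case by simp
  next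
    case (Suc h)
    show ?case
    proof (intro impI)
      assume h: "Suc h \<le> H"
      show "\<bar>y\<bar> * real (Suc h) ^ d \<le> \<eta>"
      proof (cases "h = 0")
        case True
        then show ?thesis using A[of 1] h ndy red[of 1] by simp
      next
        case False
        then have IH: "\<bar>y\<bar> * real h ^ d \<le> \<eta>" using Suc.IH h by simp
        have "real (Suc h) ^ d \<le> (2 * real h) ^ d"
          by (rule power_mono) (use False in auto)
        then have "\<bar>y\<bar> * real (Suc h) ^ d \<le> \<bar>y\<bar> * (2 ^ d * real h ^ d)"
          by (simp add: power_mult_distrib mult_left_mono)
        also have "\<dots> = 2 ^ d * (\<bar>y\<bar> * real h ^ d)" by simp
        also have "\<dots> \<le> 2 ^ d * \<eta>" using IH by simp
        finally have "\<bar>y * real (Suc h) ^ d\<bar> \<le> 1/2" using E by (simp add: abs_mult)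
        then have "nint_dist (y * real (Suc h) ^ d) = \<bar>y\<bar> * real (Suc h) ^ d"
          by (simp add: nd_small abs_mult)
        then show ?thesis using A[of "Suc h"] h red[of "Suc h"] by simp
      qed
    qed
  qed
  then show ?thesis using H ndy by simp
qed

lemma liminf_zero_iff:
  fixes X :: "nat \<Rightarrow> real"
  assumes nn: "\<And>m. X m \<ge> 0"
  shows "liminf (\<lambda>m. ereal (X m)) = 0 \<longleftrightarrow> (\<forall>\<epsilon>>0. \<forall>N. \<exists>m\<ge>N. X m < \<epsilon>)"
proof
  assume L: "liminf (\<lambda>m. ereal (X m)) = 0"
  show "\<forall>\<epsilon>>0. \<forall>N. \<exists>m\<ge>N. X m < \<epsilon>"
  proof (rule ccontr)
    assume "\<not> ?thesis"
    then obtain \<epsilon> N where e: "\<epsilon> > 0" "\<And>m. m \<ge> N \<Longrightarrow> X m \<ge> \<epsilon>" by (auto simp: not_less)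
    have "eventually (\<lambda>m. ereal \<epsilon> \<le> ereal (X m)) sequentially"
      using e(2) by (auto simp: eventually_sequentially)
    then have "ereal \<epsilon> \<le> liminf (\<lambda>m. ereal (X m))" by (rule Liminf_bounded)
    then show False using L e(1) by simp
  qed
next
  assume R: "\<forall>\<epsilon>>0. \<forall>N. \<exists>m\<ge>N. X m < \<epsilon>"
  have "0 \<le> liminf (\<lambda>m. ereal (X m))"
    by (rule Liminf_bounded) (use nn in auto)
  moreover have "liminf (\<lambda>m. ereal (X m)) \<le> 0"
  proof (rule ereal_le_epsilon2)
    fix e :: real assume e: "0 < e"
    have "(INF m\<in>{n..}. ereal (X m)) \<le> 0 + ereal e" for n
    proof -
      obtain m where "m \<ge> n" "X m < e" using R e by blast
      then show ?thesis by (intro INF_lower2[of m]) auto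
    qed
    then show "liminf (\<lambda>m. ereal (X m)) \<le> 0 + ereal e"
      unfolding liminf_SUP_INF by (rule SUP_least)
  qed
  ultimately show "liminf (\<lambda>m. ereal (X m)) = 0" by simp
qed

lemma dir_back:
  fixes a :: real and q n r k :: nat
  assumes n: "n \<le> r * q"
  shows "nint_dist (a * real (n + q) ^ k - a * real n ^ k)
           \<le> nint_dist (a * real q) * (real k * real (Suc r) ^ (k - 1) * real q ^ (k - 1))"
proof -
  define S' :: nat where "S' = (\<Sum>i<k. n ^ (k - Suc i) * (n + q) ^ i)"
  have "real (n + q) ^ k - real n ^ k = (real (n + q) - real n) * real S'"
  proof -
    have "real S' = (\<Sum>i<k. real n ^ (k - Suc i) * real (n + q) ^ i)" by (simp add: S'_def)
    then show ?thesis using power_diff_sumr2[of "real (n+q)" k "real n"] by simp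
  qed
  then have eq1: "real (n + q) ^ k - real n ^ k = real q * real S'" by simp
  define e where "e = a * real q - of_int (round (a * real q))"
  have nde: "nint_dist (a * real q) = \<bar>e\<bar>" by (simp add: e_def nd_round)
  have "a * real (n + q) ^ k - a * real n ^ k = a * real q * real S'"
    using eq1 by (simp add: right_diff_distrib[symmetric])
  also have "\<dots> = e * real S' + of_int (round (a * real q) * int S')"
    by (simp add: e_def algebra_simps)
  finally have "nint_dist (a * real (n + q) ^ k - a * real n ^ k) = nint_dist (e * real S')"
    by (simp only: nd_add_int)
  also have "\<dots> \<le> \<bar>e\<bar> * real S'" using nd_abs_le[of "e * real S'"] by (simp add: abs_mult)
  also have "real S' \<le> real k * real (Suc r) ^ (k - 1) * real q ^ (k - 1)"
  proof -
    have "S' \<le> (\<Sum>i<k. (n + q) ^ (k - 1))"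
      unfolding S'_def
    proof (rule sum_mono)
      fix i assume i: "i \<in> {..<k}"
      have "n ^ (k - Suc i) * (n + q) ^ i \<le> (n + q) ^ (k - Suc i) * (n + q) ^ i"
        by (intro mult_right_mono power_mono) auto
      also have "\<dots> = (n + q) ^ (k - 1)" using i by (simp add: power_add[symmetric])
      finally show "n ^ (k - Suc i) * (n + q) ^ i \<le> (n + q) ^ (k - 1)" .
    qed
    also have "\<dots> = k * (n + q) ^ (k - 1)" by simp
    also have "\<dots> \<le> k * (Suc r * q) ^ (k - 1)"
      using n by (intro mult_left_mono power_mono) auto
    also have "\<dots> = k * (Suc r) ^ (k - 1) * q ^ (k - 1)" by (simp only: power_mult_distrib mult.assoc)
    finally have "S' \<le> k * (Suc r) ^ (k - 1) * q ^ (k - 1)" .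
    then show ?thesis by (metis of_nat_le_iff of_nat_mult of_nat_power)
  qed
  then have "\<bar>e\<bar> * real S' \<le> \<bar>e\<bar> * (real k * real (Suc r) ^ (k - 1) * real q ^ (k - 1))"
    by (simp add: mult_left_mono)
  finally show ?thesis using nde by simp
qed

lemma lead_mono: "Lead k a (\<lambda>x. a * x ^ k)"
  unfolding Lead_def
proof (rule exI[of _ "\<lambda>i. if i = k then a else 0"], intro conjI allI)
  fix x :: real
  have "(\<Sum>i\<le>k. (if i = k then a else 0) * x ^ i) = (\<Sum>i\<le>k. if i = k then a * x ^ i else 0)"
    by (rule sum.cong) auto
  also have "\<dots> = a * x ^ k" by (simp add: sum.delta')
  finally show "a * x ^ k = (\<Sum>i\<le>k. (if i = k then a else 0) * x ^ i)" by simp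
qed simp

lemma forward_core:
  fixes a :: real and d :: nat and \<eta> :: real
  assumes RP: "repetition_property_T (\<lambda>n. frac (a * real n ^ Suc d))"
    and eta: "\<eta> > 0" "2 ^ d * \<eta> \<le> 1/2"
  shows "\<exists>q\<ge>1. nint_dist (a * real (fact (Suc d) * q)) * real q ^ d \<le> \<eta>"
proof -
  define k where "k = Suc d"
  define \<epsilon>0 where "\<epsilon>0 = \<eta> / 2 ^ d"
  have e0: "\<epsilon>0 > 0" using eta by (simp add: \<epsilon>0_def)
  obtain q :: nat where q: "q \<ge> 1"
    "\<And>n. n \<le> k * q \<Longrightarrow> torus_dist (frac (a * real n ^ k)) (frac (a * real (n + q) ^ k)) < \<epsilon>0"
    using RP e0 unfolding repetition_property_T_def k_def by fastforce
  have q2: "nint_dist (a * real (n + q) ^ k - a * real n ^ k) < \<epsilon>0" if "n \<le> k * q" for n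
    using q(2)[OF that] by (simp add: torus_frac)
  have L: "Lead d (real (Suc d) * real q * a) (\<lambda>x. a * (x + real q) ^ k - a * x ^ k)"
    using diff_lead[OF lead_mono[of "Suc d" a], of "real q"] unfolding k_def by simp
  define z where "z = a * real (fact (Suc d) * q)"
  have A: "nint_dist (z * real h ^ d) \<le> \<eta>" if h: "1 \<le> h" "h \<le> q" for h
  proof -
    have "\<forall>i\<le>d. nint_dist (a * (0 + real i * real h + real q) ^ k - a * (0 + real i * real h) ^ k) \<le> \<epsilon>0"
    proof (intro allI impI)
      fix i assume i: "i \<le> d"
      have "i * h \<le> k * q" using i h unfolding k_def by (intro mult_mono) auto
      then have "nint_dist (a * real (i * h + q) ^ k - a * real (i * h) ^ k) < \<epsilon>0" by (rule q2)
      then show "nint_dist (a * (0 + real i * real h + real q) ^ k - a * (0 + real i * real h) ^ k) \<le> \<epsilon>0"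
        by simp
    qed
    from iter_lead[OF L this] have "nint_dist (fact d * real h ^ d * (real (Suc d) * real q * a)) \<le> 2 ^ d * \<epsilon>0" .
    moreover have "fact d * real h ^ d * (real (Suc d) * real q * a) = z * real h ^ d"
      by (simp add: z_def fact_Suc algebra_simps)
    moreover have "2 ^ d * \<epsilon>0 = \<eta>" by (simp add: \<epsilon>0_def)
    ultimately show ?thesis by metis
  qed
  have "nint_dist z * real q ^ d \<le> \<eta>" by (rule sweep[OF A eta(2) q(1)])
  then show ?thesis using q(1) unfolding z_def by blast
qed

lemma nd_zero: "nint_dist 0 = 0"
  using nd_abs_le[of 0] nd_nonneg[of 0] by simp

theorem theorem3p5:
  fixes k :: nat and a :: real
  assumes "k \<ge> 1"
  shows "repetition_property_T (\<lambda>n. frac (a * real n ^ k)) \<longleftrightarrow>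
         liminf (\<lambda>m. ereal (real (Suc m) ^ (k - 1) * nint_dist (a * real (Suc m)))) = 0"
proof -
  obtain d where kd: "k = Suc d" using assms by (cases k) auto
  define X where "X m = real (Suc m) ^ (k - 1) * nint_dist (a * real (Suc m))" for m
  have nn: "X m \<ge> 0" for m by (simp add: X_def nd_nonneg)
  have "liminf (\<lambda>m. ereal (X m)) = 0 \<longleftrightarrow> (\<forall>\<epsilon>>0. \<forall>N. \<exists>m\<ge>N. X m < \<epsilon>)"
    by (rule liminf_zero_iff[OF nn])
  moreover have "repetition_property_T (\<lambda>n. frac (a * real n ^ k)) \<longleftrightarrow> (\<forall>\<epsilon>>0. \<forall>N. \<exists>m\<ge>N. X m < \<epsilon>)"
  proof
    assume RP: "repetition_property_T (\<lambda>n. frac (a * real n ^ k))"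
    show "\<forall>\<epsilon>>0. \<forall>N. \<exists>m\<ge>N. X m < \<epsilon>"
    proof (intro allI impI)
      fix \<epsilon> :: real and N :: nat assume e: "\<epsilon> > 0"
      show "\<exists>m\<ge>N. X m < \<epsilon>"
      proof (cases "\<exists>q\<ge>1. nint_dist (a * real q) = 0")
        case True
        then obtain q :: nat where q: "q \<ge> 1" "nint_dist (a * real q) = 0" by blast
        define m where "m = q * Suc N - 1"
        have sm: "Suc m = q * Suc N" using q(1) by (simp add: m_def)
        have "m \<ge> N" using q(1) 
        proof -
          have "1 * Suc N \<le> q * Suc N" using q(1) by (rule mult_right_mono) simp
          then show ?thesis by (simp add: m_def)
        qed
        have "a * real (Suc m) = 0 + of_int (round (a * real q) * int (Suc N))"
        proof -
          have "a * real (Suc m) = (a * real q) * real (Suc N)" unfolding sm of_nat_mult by (simp only: mult.assoc)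
          also have "\<dots> = of_int (round (a * real q)) * real (Suc N)" using nd_zero_int[OF q(2)] by simp
          finally show ?thesis by simp
        qed
        then have "nint_dist (a * real (Suc m)) = 0" by (simp only: nd_add_int nd_zero)
        then have "X m = 0" by (simp add: X_def)
        then show ?thesis using \<open>m \<ge> N\<close> e by auto
      next
        case False
        then have pos: "nint_dist (a * real j) > 0" if "j \<ge> 1" for j
          using that nd_nonneg[of "a * real j"] by force
        define S where "S = insert 1 ((\<lambda>j. nint_dist (a * real j)) ` {1..N})"
        define \<delta> where "\<delta> = Min S"
        have fS: "finite S" "S \<noteq> {}" by (auto simp: S_def)
        have dpos: "\<delta> > 0" unfolding \<delta>_def using fS by (subst Min_gr_iff) (auto simp: S_def pos)
        have dle: "\<delta> \<le> nint_dist (a * real j)" if "1 \<le> j" "j \<le> N" for j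
          unfolding \<delta>_def using fS that by (intro Min_le) (auto simp: S_def)
        define F :: real where "F = fact k ^ d"
        have F: "F \<ge> 1" unfolding F_def by simp
        define \<eta> where "\<eta> = min (min (\<epsilon> / (2 * F)) (1 / 2 / 2 ^ d)) (\<delta> / 2)"
        have "\<epsilon> / (2 * F) > 0" "1 / 2 / 2 ^ d > (0::real)" "\<delta> / 2 > 0" using e dpos F by auto
        then have eta1: "\<eta> > 0" by (simp add: \<eta>_def)
        have "\<eta> \<le> 1 / 2 / 2 ^ d" by (simp add: \<eta>_def)
        then have eta2: "2 ^ d * \<eta> \<le> 1/2" by (simp add: field_simps)
        have eta: "\<eta> > 0" "2 ^ d * \<eta> \<le> 1/2" "\<eta> \<le> \<epsilon> / (2 * F)" "\<eta> \<le> \<delta> / 2"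
          using eta1 eta2 by (auto simp: \<eta>_def)
        obtain q :: nat where q: "q \<ge> 1" "nint_dist (a * real (fact (Suc d) * q)) * real q ^ d \<le> \<eta>"
          using forward_core[of a d \<eta>] RP eta(1,2) unfolding kd by blast
        define Q where "Q = fact k * q"
        have qd: "real q ^ d \<ge> 1" using q(1) by simp
        have nQ: "nint_dist (a * real Q) \<le> \<eta>"
        proof -
          have "nint_dist (a * real Q) * 1 \<le> nint_dist (a * real Q) * real q ^ d"
            using qd nd_nonneg by (intro mult_left_mono) auto
          then show ?thesis using q(2) by (simp add: Q_def kd)
        qed
        have "Q \<ge> q" unfolding Q_def by simp
        have "Q > N"
        proof (rule ccontr)
          assume "\<not> Q > N"
          then have "\<delta> \<le> nint_dist (a * real Q)" using dle \<open>Q \<ge> q\<close> q(1) by simp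
          then show False using nQ eta(4) dpos by linarith
        qed
        define m where "m = Q - 1"
        have sm: "Suc m = Q" using \<open>Q > N\<close> by (simp add: m_def)
        have "X m = real Q ^ d * nint_dist (a * real Q)" by (simp add: X_def sm kd)
        also have "\<dots> = F * (nint_dist (a * real Q) * real q ^ d)"
        proof -
          have "real Q ^ d = F * real q ^ d" unfolding Q_def F_def of_nat_mult of_nat_fact
            by (rule power_mult_distrib)
          then show ?thesis by (simp add: mult_ac)
        qed
        also have "\<dots> \<le> F * \<eta>" using q(2) F by (simp add: Q_def kd)
        also have "\<dots> \<le> F * (\<epsilon> / (2 * F))" using eta(3) F by (intro mult_left_mono) auto
        also have "\<dots> < \<epsilon>" using F e by (simp add: field_simps)
        finally show ?thesis using \<open>Q > N\<close> by (intro exI[of _ m]) (auto simp: m_def)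
      qed
    qed
  next
    assume R: "\<forall>\<epsilon>>0. \<forall>N. \<exists>m\<ge>N. X m < \<epsilon>"
    show "repetition_property_T (\<lambda>n. frac (a * real n ^ k))"
      unfolding repetition_property_T_def
    proof (intro allI impI)
      fix \<epsilon> :: real and r :: nat assume e: "\<epsilon> > 0" and r: "r \<ge> 1"
      define C where "C = real k * real (Suc r) ^ (k - 1)"
      have C: "C > 0" using assms by (simp add: C_def)
      obtain m where m: "X m < \<epsilon> / C" 
      proof -
        have "\<epsilon> / C > 0" using e C by simp
        then show ?thesis using R that by blast
      qed
      define q where "q = Suc m"
      have "\<forall>n\<le>r * q. torus_dist (frac (a * real n ^ k)) (frac (a * real (n + q) ^ k)) < \<epsilon>"
      proof (intro allI impI)
        fix n assume n: "n \<le> r * q"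
        have "torus_dist (frac (a * real n ^ k)) (frac (a * real (n + q) ^ k))
              = nint_dist (a * real (n + q) ^ k - a * real n ^ k)" by (simp add: torus_frac)
        also have "\<dots> \<le> nint_dist (a * real q) * (C * real q ^ (k - 1))"
          using dir_back[OF n, of a k] by (simp add: C_def mult_ac)
        also have "\<dots> = X m * C" by (simp add: X_def q_def mult_ac)
        also have "\<dots> < \<epsilon>" using m C by (simp add: field_simps)
        finally show "torus_dist (frac (a * real n ^ k)) (frac (a * real (n + q) ^ k)) < \<epsilon>" .
      qed
      then show "\<exists>q\<ge>1. \<forall>n\<le>r * q. torus_dist (frac (a * real n ^ k)) (frac (a * real (n + q) ^ k)) < \<epsilon>"
        by (intro exI[of _ q]) (simp add: q_def)
    qed
  qed
  ultimately show ?thesis unfolding X_def by simp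
qed

end
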